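(* Let $D=(0,1)$, $\alpha\in(3/2,2)$, $\mu\ge\alpha$, $f\in L^2(D)$, $q\in L^\infty(D)$, $c_0=\Gamma(\mu+1)/\Gamma(1+\mu-\alpha)$ and $p(x)=c_0x^{\mu-\alpha}-q(x)x^\mu$. Assume the bilinear form $A(\psi,\varphi)=(\psi',\varphi')+({}_0^RD_x^{2-\alpha}\psi,q\varphi)+({}_0^RD_x^{2-\alpha}\psi)(1)(p,\varphi)$ on $V=H^1_0(D)$ satisfies: $A(w,v)=0\ \forall v\in V\Rightarrow w=0$, and $A(w,v)=0\ \forall w\in V\Rightarrow v=0$. Let $w\in V$ be the unique solution of $A(w,\varphi)=(f,\varphi)$ for all $\varphi\in V$ (the weak form of $-w''+q\,{}_0^RD_x^{2-\alpha}w+({}_0^RD_x^{2-\alpha}w)(1)(c_0x^{\mu-\alpha}-qx^\mu)=f$, $w(0)=w(1)=0$). Then $$u={}_0^RD_x^{2-\alpha}w-({}_0^RD_x^{2-\alpha}w)(1)\,x^\mu$$ is a solution of $-{}_0^RD_x^{\alpha}u+qu=f$ in $D$ (as an identity in $L^2(D)$), $u(0)=u(1)=0$.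
   Context: $(\cdot,\cdot)$ is the $L^2(D)$ inner product. $({}_0I_x^\gamma g)(x)=\frac{1}{\Gamma(\gamma)}\int_0^x(x-t)^{\gamma-1}g(t)dt$ for $\gamma>0$. For $w\in H^1_0(D)$, ${}_0^RD_x^{2-\alpha}w=\frac{d}{dx}({}_0I_x^{\alpha-1}w)={}_0I_x^{\alpha-1}(w')$, and $({}_0^RD_x^{2-\alpha}w)(1)=\frac{1}{\Gamma(\alpha-1)}\int_0^1(1-t)^{\alpha-2}w'(t)dt$. The Riemann–Liouville derivative of order $\alpha\in(1,2)$ is ${}_0^RD_x^\alpha u=\frac{d^2}{dx^2}({}_0I_x^{2-\alpha}u)$. *)

theory Defs
  imports "HOL-Analysis.Analysis"
begin

abbreviation dom01 :: "real set" where "dom01 \<equiv> {0<..<1}"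

definition L2D :: "(real \<Rightarrow> real) \<Rightarrow> bool" where
  "L2D f \<longleftrightarrow> set_borel_measurable lborel dom01 f
      \<and> set_integrable lborel dom01 (\<lambda>x. (f x)^2)"

definition LinfD :: "(real \<Rightarrow> real) \<Rightarrow> bool" where
  "LinfD q \<longleftrightarrow> set_borel_measurable lborel dom01 q
      \<and> (\<exists>C. AE x in lborel. x \<in> dom01 \<longrightarrow> \<bar>q x\<bar> \<le> C)"

definition ip :: "(real \<Rightarrow> real) \<Rightarrow> (real \<Rightarrow> real) \<Rightarrow> real" where
  "ip f g = (LINT x:dom01|lborel. f x * g x)"

text \<open>H^1_0(D), continuous representative: w is the primitive of its weak
  derivative dw \<in> L2(D), starting at 0, and w(1) = 0.\<close>
definition H10 :: "(real \<Rightarrow> real) \<Rightarrow> (real \<Rightarrow> real) \<Rightarrow> bool" where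
  "H10 w dw \<longleftrightarrow> L2D dw
      \<and> (\<forall>x\<in>{0..1}. w x = (LINT t:{0<..<x}|lborel. dw t))
      \<and> w 1 = 0"

definition frac_int :: "real \<Rightarrow> (real \<Rightarrow> real) \<Rightarrow> real \<Rightarrow> real" where
  "frac_int \<gamma> g x = (1 / Gamma \<gamma>) * (LINT t:{0<..<x}|lborel. (x - t) powr (\<gamma> - 1) * g t)"

text \<open>For w in H^1_0 with weak derivative dw:
  RL derivative of order 2 - alpha, i.e. I^(alpha-1) (w').\<close>
definition rl_D2a :: "real \<Rightarrow> (real \<Rightarrow> real) \<Rightarrow> real \<Rightarrow> real" where
  "rl_D2a \<alpha> dw = frac_int (\<alpha> - 1) dw"

definition Aform :: "real \<Rightarrow> (real \<Rightarrow> real) \<Rightarrow> (real \<Rightarrow> real) \<Rightarrow> (real \<Rightarrow> real)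
    \<Rightarrow> (real \<Rightarrow> real) \<Rightarrow> (real \<Rightarrow> real) \<Rightarrow> real" where
  "Aform \<alpha> q p dpsi phi dphi =
     ip dpsi dphi + ip (rl_D2a \<alpha> dpsi) (\<lambda>x. q x * phi x) + rl_D2a \<alpha> dpsi 1 * ip p phi"

text \<open>h is the Riemann-Liouville derivative of order alpha of u in the sense
  h = d^2/dx^2 (I^(2-alpha) u) on D, derivatives taken in the weak
  (absolutely continuous) sense.\<close>
definition RL_deriv_is :: "real \<Rightarrow> (real \<Rightarrow> real) \<Rightarrow> (real \<Rightarrow> real) \<Rightarrow> bool" where
  "RL_deriv_is \<alpha> u h \<longleftrightarrow>
     (\<exists>g1 a b. set_integrable lborel dom01 g1 \<and> set_integrable lborel dom01 h
        \<and> (\<forall>x\<in>dom01. frac_int (2 - \<alpha>) u x = a + (LINT t:{0<..<x}|lborel. g1 t))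
        \<and> (\<forall>x\<in>dom01. g1 x = b + (LINT t:{0<..<x}|lborel. h t)))"

end

theory Submission
  imports Defs
begin


lemma amgm: "\<bar>a * b\<bar> \<le> a^2 + (b::real)^2"
proof -
  have "0 \<le> (\<bar>a\<bar> - \<bar>b\<bar>)^2" by simp
  then have "2*(\<bar>a\<bar>*\<bar>b\<bar>) \<le> \<bar>a\<bar>^2 + \<bar>b\<bar>^2" by (simp add: power2_diff algebra_simps)
  moreover have "0 \<le> \<bar>a\<bar>*\<bar>b\<bar>" by simp
  ultimately show ?thesis unfolding abs_mult power2_abs by linarith
qed

lemma sbm_mult[intro]:
  fixes f g :: "real \<Rightarrow> real"
  assumes "set_borel_measurable M S f" "set_borel_measurable M S g"
  shows "set_borel_measurable M S (\<lambda>x. f x * g x)"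
proof -
  have "(\<lambda>x. (indicator S x *\<^sub>R f x) * (indicator S x *\<^sub>R g x)) \<in> borel_measurable M"
    using assms unfolding set_borel_measurable_def by measurable
  also have "(\<lambda>x. (indicator S x *\<^sub>R f x) * (indicator S x *\<^sub>R g x)) = (\<lambda>x. indicator S x *\<^sub>R (f x * g x))"
    by (auto simp: indicator_def)
  finally show ?thesis unfolding set_borel_measurable_def .
qed

lemma sbm_add[intro]:
  fixes f g :: "real \<Rightarrow> real"
  assumes "set_borel_measurable M S f" "set_borel_measurable M S g"
  shows "set_borel_measurable M S (\<lambda>x. f x + g x)"
proof -
  have "(\<lambda>x. (indicator S x *\<^sub>R f x) + (indicator S x *\<^sub>R g x)) \<in> borel_measurable M"
    using assms unfolding set_borel_measurable_def by measurable
  then show ?thesis unfolding set_borel_measurable_def by (simp add: distrib_left)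
qed

lemma sbm_diff[intro]:
  fixes f g :: "real \<Rightarrow> real"
  assumes "set_borel_measurable M S f" "set_borel_measurable M S g"
  shows "set_borel_measurable M S (\<lambda>x. f x - g x)"
proof -
  have "(\<lambda>x. (indicator S x *\<^sub>R f x) - (indicator S x *\<^sub>R g x)) \<in> borel_measurable M"
    using assms unfolding set_borel_measurable_def by measurable
  then show ?thesis unfolding set_borel_measurable_def by (simp add: right_diff_distrib)
qed

lemma sbm_const[intro]:
  assumes "S \<in> sets M"
  shows "set_borel_measurable M S (\<lambda>x. c::real)"
  using assms unfolding set_borel_measurable_def by measurable

lemma sbm_borel[intro]:
  fixes f :: "real \<Rightarrow> real"
  assumes "f \<in> borel_measurable borel"
  shows "set_borel_measurable lborel dom01 f"
  using assms unfolding set_borel_measurable_def by measurable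

lemma int_const_dom01: "set_integrable lborel dom01 (\<lambda>x. c::real)"
  unfolding set_integrable_def
  using integrable_real_indicator[of "dom01" lborel] by (simp add: integrable_mult_left)

lemma bnd_int:
  fixes g :: "real \<Rightarrow> real"
  assumes "set_borel_measurable lborel dom01 g" "AE x in lborel. x \<in> dom01 \<longrightarrow> \<bar>g x\<bar> \<le> C"
  shows "set_integrable lborel dom01 g"
  by (rule set_integrable_bound[OF int_const_dom01[of C] assms(1)]) (use assms(2) in auto)

lemma L2_meas: "L2D g \<Longrightarrow> set_borel_measurable lborel dom01 g"
  by (simp add: L2D_def)

lemma L2_L1:
  assumes "L2D g" shows "set_integrable lborel dom01 g"
proof (rule set_integrable_bound[OF _ L2_meas[OF assms]])
  show "set_integrable lborel dom01 (\<lambda>x. 1 + (g x)^2)"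
    using assms int_const_dom01[of 1] by (simp add: L2D_def)
  have "\<bar>g x\<bar> \<le> \<bar>1 + (g x)^2\<bar>" for x
    using amgm[of "g x" 1] by simp
  then show "AE x in lborel. x \<in> dom01 \<longrightarrow> norm (g x) \<le> norm (1 + (g x)^2)" by auto
qed

lemma L2_prod:
  assumes "L2D g" "L2D h" shows "set_integrable lborel dom01 (\<lambda>x. g x * h x)"
proof (rule set_integrable_bound[OF _ sbm_mult[OF L2_meas[OF assms(1)] L2_meas[OF assms(2)]]])
  show "set_integrable lborel dom01 (\<lambda>x. (g x)^2 + (h x)^2)"
    using assms by (simp add: L2D_def)
  have "\<bar>g x * h x\<bar> \<le> \<bar>(g x)^2 + (h x)^2\<bar>" for x
    using amgm[of "g x" "h x"] by simp
  then show "AE x in lborel. x \<in> dom01 \<longrightarrow> norm (g x * h x) \<le> norm ((g x)^2 + (h x)^2)" by auto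
qed

lemma L2_add:
  assumes "L2D g" "L2D h" shows "L2D (\<lambda>x. g x + h x)"
  unfolding L2D_def
proof
  show "set_borel_measurable lborel dom01 (\<lambda>x. g x + h x)"
    using assms by (intro sbm_add L2_meas)
  have "(\<lambda>x. (g x + h x)^2) = (\<lambda>x. (g x)^2 + (2 * (g x * h x) + (h x)^2))"
    by (auto simp: power2_eq_square algebra_simps)
  moreover have "set_integrable lborel dom01 (\<lambda>x. (g x)^2 + (2 * (g x * h x) + (h x)^2))"
    using assms L2_prod[OF assms] by (intro set_integral_add set_integrable_mult_right) (auto simp: L2D_def)
  ultimately show "set_integrable lborel dom01 (\<lambda>x. (g x + h x)^2)" by simp
qed

lemma L2_cmult:
  assumes "L2D g" shows "L2D (\<lambda>x. c * g x)"
  unfolding L2D_def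
proof
  show "set_borel_measurable lborel dom01 (\<lambda>x. c * g x)"
    using assms by (intro sbm_mult L2_meas sbm_const) auto
  show "set_integrable lborel dom01 (\<lambda>x. (c * g x)^2)"
    using assms by (simp add: L2D_def power_mult_distrib)
qed

lemma L2_diff:
  assumes "L2D g" "L2D h" shows "L2D (\<lambda>x. g x - h x)"
  using L2_add[OF assms(1) L2_cmult[OF assms(2), of "-1"]] by simp

lemma bnd_L2:
  fixes g :: "real \<Rightarrow> real"
  assumes "set_borel_measurable lborel dom01 g" "AE x in lborel. x \<in> dom01 \<longrightarrow> \<bar>g x\<bar> \<le> C"
  shows "L2D g"
  unfolding L2D_def
proof
  show "set_borel_measurable lborel dom01 g" by fact
  show "set_integrable lborel dom01 (\<lambda>x. (g x)^2)"
  proof (rule bnd_int[where C="C^2"])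
    show "set_borel_measurable lborel dom01 (\<lambda>x. (g x)^2)"
      using sbm_mult[OF assms(1) assms(1)] by (simp add: power2_eq_square)
    show "AE x in lborel. x \<in> dom01 \<longrightarrow> \<bar>(g x)^2\<bar> \<le> C^2"
      using assms(2) by eventually_elim (auto simp: abs_le_square_iff intro: power_mono[of "\<bar>_\<bar>" C 2, simplified])
  qed
qed

lemma int_bnd_mult:
  fixes g k :: "real \<Rightarrow> real"
  assumes "set_integrable lborel dom01 g" "set_borel_measurable lborel dom01 k"
    "AE x in lborel. x \<in> dom01 \<longrightarrow> \<bar>k x\<bar> \<le> C"
  shows "set_integrable lborel dom01 (\<lambda>x. k x * g x)"
proof (rule set_integrable_bound[where f="\<lambda>x. C * \<bar>g x\<bar>"])
  show "set_integrable lborel dom01 (\<lambda>x. C * \<bar>g x\<bar>)"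
    using set_integrable_abs[OF assms(1)] by auto
  show "set_borel_measurable lborel dom01 (\<lambda>x. k x * g x)"
    using assms(1,2) by (intro sbm_mult) (auto simp: set_integrable_def set_borel_measurable_def)
  show "AE x in lborel. x \<in> dom01 \<longrightarrow> norm (k x * g x) \<le> norm (C * \<bar>g x\<bar>)"
    using assms(3) by eventually_elim (auto simp: abs_mult intro: mult_right_mono order_trans[OF _ abs_ge_self])
qed


lemma cont_sbm:
  fixes f :: "real \<Rightarrow> real"
  assumes "continuous_on {0..1} f" shows "set_borel_measurable lborel dom01 f"
proof -
  have "continuous_on dom01 f" using assms by (rule continuous_on_subset) auto
  then have "set_borel_measurable borel dom01 f" by (intro set_measurable_continuous_on) auto
  then show ?thesis unfolding set_borel_measurable_def by simp
qed

lemma cont_bnd: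
  fixes f :: "real \<Rightarrow> real"
  assumes "continuous_on {0..1} f" obtains B where "B > 0" "\<And>x. x \<in> {0..1} \<Longrightarrow> \<bar>f x\<bar> \<le> B"
proof -
  have "compact (f ` {0..1})" by (intro compact_continuous_image assms) auto
  then have "bounded (f ` {0..1})" by (rule compact_imp_bounded)
  then obtain B where "B > 0" "\<forall>y\<in>f ` {0..1}. norm y \<le> B" by (auto simp: bounded_pos)
  then show ?thesis using that by auto
qed

lemma prim_int:
  fixes g :: "real \<Rightarrow> real"
  assumes "set_integrable lborel dom01 g" "x \<le> 1"
  shows "set_integrable lborel {0<..<x} g"
  by (rule set_integrable_subset[OF assms(1)]) (use assms(2) in auto)

lemma prim_cont:
  fixes g :: "real \<Rightarrow> real"
  assumes g: "set_integrable lborel dom01 g"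
  shows "continuous_on {0..1} (\<lambda>x. LINT t:{0<..<x}|lborel. g t)"
proof -
  have "g integrable_on {0<..<1}" using set_borel_integral_eq_integral(1)[OF g] .
  then have "g integrable_on {0..1}" by (simp add: integrable_on_Icc_iff_Ioo)
  then have "continuous_on {0..1} (\<lambda>x. integral {0..x} g)" by (rule indefinite_integral_continuous_1)
  moreover have "integral {0..x} g = (LINT t:{0<..<x}|lborel. g t)" if "x \<in> {0..1}" for x
    using set_borel_integral_eq_integral(2)[OF prim_int[OF g, of x]] that
    by (simp add: integral_open_interval_real)
  ultimately show ?thesis by (rule continuous_on_eq) auto
qed

lemma prim_bnd:
  fixes g :: "real \<Rightarrow> real"
  assumes g: "set_integrable lborel dom01 g" and x: "x \<le> 1"
  shows "\<bar>LINT t:{0<..<x}|lborel. g t\<bar> \<le> (LINT t:dom01|lborel. \<bar>g t\<bar>)"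
proof -
  have "\<bar>LINT t:{0<..<x}|lborel. g t\<bar> \<le> (LINT t:{0<..<x}|lborel. \<bar>g t\<bar>)"
    using set_integral_norm_bound[OF prim_int[OF g x]] by simp
  also have "\<dots> \<le> (LINT t:dom01|lborel. \<bar>g t\<bar>)"
    unfolding set_lebesgue_integral_def
    using set_integrable_abs[OF prim_int[OF g x]] set_integrable_abs[OF g] x
    by (intro integral_mono) (auto simp: set_integrable_def indicator_def)
  finally show ?thesis .
qed


lemma beta01:
  fixes a b :: real assumes a: "a > 0" and b: "b > 0"
  shows "set_integrable lborel {0<..<1} (\<lambda>r. r powr (a-1) * (1-r) powr (b-1))"
    and "(LINT r:{0<..<1}|lborel. r powr (a-1) * (1-r) powr (b-1)) = Beta a b"
proof -
  show 1: "set_integrable lborel {0<..<1} (\<lambda>r. r powr (a-1) * (1-r) powr (b-1))"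
    by (rule set_integrable_subset[OF integrable_Beta[OF a b]]) auto
  have "((\<lambda>r. r powr (a-1) * (1-r) powr (b-1)) has_integral Beta a b) {0<..<1}"
    using has_integral_Beta_real[OF a b] by (simp add: has_integral_Icc_iff_Ioo)
  then show "(LINT r:{0<..<1}|lborel. r powr (a-1) * (1-r) powr (b-1)) = Beta a b"
    using set_borel_integral_eq_integral(2)[OF 1] by (simp add: integral_unique)
qed

lemma beta_shift:
  fixes a b x y :: real assumes a: "a > 0" and b: "b > 0" and xy: "y < x"
  shows "set_integrable lborel {y<..<x} (\<lambda>s. (x-s) powr (a-1) * (s-y) powr (b-1))"
    and "(LINT s:{y<..<x}|lborel. (x-s) powr (a-1) * (s-y) powr (b-1)) = Beta a b * (x-y) powr (a+b-1)"
proof -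
  define L where "L = x - y"
  have L: "L > 0" using xy by (simp add: L_def)
  define F where "F = (\<lambda>s. indicator {y<..<x} s *\<^sub>R ((x-s) powr (a-1) * (s-y) powr (b-1)))"
  have eq: "F (y + L * r) = L powr (a+b-2) * (indicator {0<..<1} r *\<^sub>R (r powr (b-1) * (1-r) powr (a-1)))" for r
  proof (cases "r \<in> {0<..<1}")
    case True
    then have "L*r < L*1" "0 < L*r" using L by (simp_all add: mult_strict_left_mono)
    then have "y + L*r \<in> {y<..<x}" by (auto simp: L_def)
    moreover have "x - (y + L*r) = L * (1-r)" by (simp add: L_def algebra_simps)
    moreover have "(y + L*r) - y = L * r" by simp
    moreover have "(L * (1-r)) powr (a-1) = L powr (a-1) * (1-r) powr (a-1)"
      using True L by (auto intro!: powr_mult)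
    moreover have "(L * r) powr (b-1) = L powr (b-1) * r powr (b-1)"
      using True L by (auto intro!: powr_mult)
    moreover have "L powr (a+b-2) = L powr (a-1) * L powr (b-1)"
      by (simp add: powr_add[symmetric])
    ultimately show ?thesis using True
      by (simp add: F_def)
  next
    case False
    then have "r \<le> 0 \<or> 1 \<le> r" by auto
    then have "L*r \<le> 0 \<or> L*1 \<le> L*r" using L
      by (auto intro: mult_nonneg_nonpos mult_left_mono)
    then have "y + L*r \<notin> {y<..<x}" by (auto simp: L_def)
    then show ?thesis using False by (simp add: F_def)
  qed
  have i1: "integrable lborel (\<lambda>r. indicator {0<..<1} r *\<^sub>R (r powr (b-1) * (1-r) powr (a-1)))"
    using beta01(1)[OF b a] by (simp add: set_integrable_def)
  have "integrable lborel (\<lambda>r. F (y + L * r))"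
    unfolding eq using i1 by simp
  then have "integrable lborel F"
    using lborel_integrable_real_affine_iff[of L F y] L by simp
  then show "set_integrable lborel {y<..<x} (\<lambda>s. (x-s) powr (a-1) * (s-y) powr (b-1))"
    by (simp add: set_integrable_def F_def)
  have "integral\<^sup>L lborel F = L * integral\<^sup>L lborel (\<lambda>r. F (y + L * r))"
    using lborel_integral_real_affine[of L F y] L by simp
  also have "\<dots> = L * (L powr (a+b-2) * Beta b a)"
    unfolding eq using beta01(2)[OF b a] by (simp add: set_lebesgue_integral_def)
  also have "\<dots> = Beta a b * L powr (a+b-1)"
    using L by (simp add: Beta_commute powr_diff powr_add field_simps power2_eq_square)
  finally show "(LINT s:{y<..<x}|lborel. (x-s) powr (a-1) * (s-y) powr (b-1)) = Beta a b * (x-y) powr (a+b-1)"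
    by (simp add: set_lebesgue_integral_def F_def L_def)
qed


lemma meas_param:
  fixes g :: "real \<Rightarrow> real" and e :: real
  assumes g[measurable]: "g \<in> borel_measurable borel"
  shows "(\<lambda>x. LINT t|lborel. (if 0 < t \<and> t < x then (x - t) powr e * g t else 0)) \<in> borel_measurable borel"
  by measurable

lemma powr_le1: "0 \<le> x \<Longrightarrow> x \<le> 1 \<Longrightarrow> 0 \<le> e \<Longrightarrow> x powr e \<le> (1::real)"
  by (metis powr_mono2 powr_one_eq_one)

lemma sbm_ind: fixes g :: "real \<Rightarrow> real" shows "set_borel_measurable lborel dom01 g \<Longrightarrow> (\<lambda>t. indicator dom01 t * g t) \<in> borel_measurable borel"
  by (simp add: set_borel_measurable_def real_scaleR_def)

lemma frac_meas:
  fixes g :: "real \<Rightarrow> real"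
  assumes g: "set_borel_measurable lborel dom01 g"
  shows "set_borel_measurable lborel dom01 (frac_int \<beta> g)"
proof -
  define g' where "g' = (\<lambda>t. indicator dom01 t * g t)"
  have [measurable]: "g' \<in> borel_measurable borel" using sbm_ind[OF g] by (simp add: g'_def)
  have m: "(\<lambda>x. indicator dom01 x * ((1 / Gamma \<beta>) * (LINT t|lborel. (if 0 < t \<and> t < x then (x - t) powr (\<beta> - 1) * g' t else 0)))) \<in> borel_measurable borel"
    by measurable
  have "indicator dom01 x * ((1 / Gamma \<beta>) * (LINT t|lborel. (if 0 < t \<and> t < x then (x - t) powr (\<beta> - 1) * g' t else 0)))
      = indicator dom01 x *\<^sub>R frac_int \<beta> g x" for x
  proof (cases "x \<in> dom01")
    case True
    then show ?thesis
      unfolding frac_int_def set_lebesgue_integral_def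
      by (auto simp: g'_def indicator_def intro!: arg_cong[where f="\<lambda>y. _ * y"] Bochner_Integration.integral_cong)
  qed simp
  then show ?thesis using m unfolding set_borel_measurable_def by simp
qed

lemma kern_sq_int:
  fixes \<beta> x :: real
  assumes b: "1/2 < \<beta>" and x: "0 < x"
  shows "set_integrable lborel {0<..<x} (\<lambda>t. (x - t) powr (2*\<beta> - 2))"
    and "(LINT t:{0<..<x}|lborel. (x - t) powr (2*\<beta> - 2)) = Beta (2*\<beta> - 1) 1 * x powr (2*\<beta>-1)"
proof -
  have e: "(x - t) powr ((2*\<beta>-1) - 1) * (t - 0) powr (1 - 1) = (x - t) powr (2*\<beta> - 2)" if "t \<in> {0<..<x}" for t
    using that by auto
  show "set_integrable lborel {0<..<x} (\<lambda>t. (x - t) powr (2*\<beta> - 2))"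
    using beta_shift(1)[of "2*\<beta>-1" 1 0 x] b x
    by (subst set_integrable_cong[OF refl refl e[symmetric]]) auto
  have "(LINT t:{0<..<x}|lborel. (x - t) powr (2*\<beta> - 2)) = (LINT t:{0<..<x}|lborel. (x - t) powr ((2*\<beta>-1) - 1) * (t - 0) powr (1 - 1))"
    by (rule set_lebesgue_integral_cong) (use e in auto)
  then show "(LINT t:{0<..<x}|lborel. (x - t) powr (2*\<beta> - 2)) = Beta (2*\<beta> - 1) 1 * x powr (2*\<beta>-1)"
    using beta_shift(2)[of "2*\<beta>-1" 1 0 x] b x by simp
qed

lemma frac_L2:
  fixes g :: "real \<Rightarrow> real" and \<beta> :: real
  assumes b: "1/2 < \<beta>" and g: "L2D g" and x: "0 < x" "x \<le> 1"
  shows "set_integrable lborel {0<..<x} (\<lambda>t. (x - t) powr (\<beta> - 1) * g t)"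
    and "\<bar>LINT t:{0<..<x}|lborel. (x - t) powr (\<beta> - 1) * g t\<bar>
           \<le> Beta (2*\<beta> - 1) 1 + (LINT t:dom01|lborel. (g t)^2)"
proof -
  have sq: "((x - t) powr (\<beta> - 1))^2 = (x - t) powr (2*\<beta> - 2)" if "t < x" for t
  proof -
    have "(x - t) powr (\<beta> - 1) * (x - t) powr (\<beta> - 1) = (x - t) powr ((\<beta> - 1) + (\<beta> - 1))"
      by (rule powr_add[symmetric])
    then show ?thesis by (simp add: power2_eq_square)
  qed
  have g2: "set_integrable lborel {0<..<x} (\<lambda>t. (g t)^2)"
    by (rule set_integrable_subset[where A=dom01]) (use g x in \<open>auto simp: L2D_def\<close>)
  have k2: "set_integrable lborel {0<..<x} (\<lambda>t. (x - t) powr (2*\<beta> - 2))"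
    using kern_sq_int(1)[OF b x(1)] .
  have bnd: "\<bar>(x - t) powr (\<beta> - 1) * g t\<bar> \<le> (x - t) powr (2*\<beta> - 2) + (g t)^2" if "t < x" for t
  proof -
    have "\<bar>(x - t) powr (\<beta> - 1) * g t\<bar> \<le> ((x - t) powr (\<beta> - 1))^2 + (g t)^2"
      by (rule amgm)
    then show ?thesis using sq[OF that] by simp
  qed
  have meas: "set_borel_measurable lborel {0<..<x} (\<lambda>t. (x - t) powr (\<beta> - 1) * g t)"
  proof -
    have [measurable]: "(\<lambda>t. indicator dom01 t * g t) \<in> borel_measurable borel"
      using sbm_ind[OF L2_meas[OF g]] .
    have "(\<lambda>t. indicator {0<..<x} t * ((x - t) powr (\<beta> - 1) * (indicator dom01 t * g t))) \<in> borel_measurable borel"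
      by measurable
    moreover have "indicator {0<..<x} t * ((x - t) powr (\<beta> - 1) * (indicator dom01 t * g t))
        = indicator {0<..<x} t *\<^sub>R ((x - t) powr (\<beta> - 1) * g t)" for t
      using x by (auto simp: indicator_def)
    ultimately show ?thesis unfolding set_borel_measurable_def by simp
  qed
  have sI: "set_integrable lborel {0<..<x} (\<lambda>t. (x - t) powr (2*\<beta> - 2) + (g t)^2)"
    using k2 g2 by (rule set_integral_add)
  show I: "set_integrable lborel {0<..<x} (\<lambda>t. (x - t) powr (\<beta> - 1) * g t)"
    by (rule set_integrable_bound[OF sI meas]) (use bnd in auto)
  have "\<bar>LINT t:{0<..<x}|lborel. (x - t) powr (\<beta> - 1) * g t\<bar>
      \<le> (LINT t:{0<..<x}|lborel. \<bar>(x - t) powr (\<beta> - 1) * g t\<bar>)"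
    using set_integral_norm_bound[OF I] by simp
  also have "\<dots> \<le> (LINT t:{0<..<x}|lborel. (x - t) powr (2*\<beta> - 2) + (g t)^2)"
    using set_integrable_abs[OF I] sI bnd by (intro set_integral_mono) auto
  also have "\<dots> = Beta (2*\<beta> - 1) 1 * x powr (2*\<beta>-1) + (LINT t:{0<..<x}|lborel. (g t)^2)"
    using k2 g2 kern_sq_int(2)[OF b x(1)] by simp
  also have "\<dots> \<le> Beta (2*\<beta> - 1) 1 + (LINT t:dom01|lborel. (g t)^2)"
  proof (rule add_mono)
    have B0: "Beta (2*\<beta> - 1) 1 \<ge> 0" unfolding Beta_def
      using b Gamma_real_pos[of "2*\<beta>-1"] Gamma_real_pos[of 1] Gamma_real_pos[of "2*\<beta>-1+1"]
      by (intro divide_nonneg_pos mult_nonneg_nonneg) auto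
    show "Beta (2*\<beta> - 1) 1 * x powr (2*\<beta>-1) \<le> Beta (2*\<beta> - 1) 1"
      using mult_left_mono[OF powr_le1[of x "2*\<beta>-1"] B0] x b by simp
    show "(LINT t:{0<..<x}|lborel. (g t)^2) \<le> (LINT t:dom01|lborel. (g t)^2)"
      unfolding set_lebesgue_integral_def
      using g2 g x by (intro integral_mono) (auto simp: set_integrable_def indicator_def L2D_def)
  qed
  finally show "\<bar>LINT t:{0<..<x}|lborel. (x - t) powr (\<beta> - 1) * g t\<bar>
           \<le> Beta (2*\<beta> - 1) 1 + (LINT t:dom01|lborel. (g t)^2)" .
qed


lemma tri_swap:
  fixes F :: "real \<Rightarrow> real \<Rightarrow> real" and x :: real
  assumes meas[measurable]: "(\<lambda>p. F (fst p) (snd p)) \<in> borel_measurable (borel \<Otimes>\<^sub>M borel)"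
    and bound: "set_integrable lborel {0<..<x} (\<lambda>t. LINT s:{t<..<x}|lborel. \<bar>F t s\<bar>)"
    and inner: "\<And>t. t \<in> {0<..<x} \<Longrightarrow> set_integrable lborel {t<..<x} (\<lambda>s. F t s)"
  shows "(LINT s:{0<..<x}|lborel. LINT t:{0<..<s}|lborel. F t s)
       = (LINT t:{0<..<x}|lborel. LINT s:{t<..<x}|lborel. F t s)"
proof -
  define H where "H = (\<lambda>t s. indicator {0<..<x} t * indicator {t<..<x} s * F t s)"
  have H3: "H = (\<lambda>t s. if 0 < t \<and> t < x \<and> t < s \<and> s < x then F t s else 0)"
    by (auto simp: H_def indicator_def intro!: ext)
  have H2: "H t s = indicator {0<..<x} s * indicator {0<..<s} t * F t s" for t s
    by (auto simp: H_def indicator_def)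
  have Hm: "(\<lambda>p. H (fst p) (snd p)) \<in> borel_measurable (lborel \<Otimes>\<^sub>M lborel)"
    unfolding H3 by measurable
  have "integrable (lborel \<Otimes>\<^sub>M lborel) (\<lambda>p. H (fst p) (snd p))"
  proof (rule lborel_pair.Fubini_integrable[OF Hm])
    have "(\<lambda>t. LINT s|lborel. norm (H (fst (t,s)) (snd (t,s)))) = (\<lambda>t. indicator {0<..<x} t * (LINT s:{t<..<x}|lborel. \<bar>F t s\<bar>))"
      by (auto simp: H_def indicator_def set_lebesgue_integral_def abs_mult intro!: ext)
    then show "integrable lborel (\<lambda>t. LINT s|lborel. norm (H (fst (t,s)) (snd (t,s))))"
      using bound by (simp add: set_integrable_def)
    show "AE t in lborel. integrable lborel (\<lambda>s. H (fst (t,s)) (snd (t,s)))"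
    proof (intro AE_I2)
      fix t show "integrable lborel (\<lambda>s. H (fst (t,s)) (snd (t,s)))"
      proof (cases "t \<in> {0<..<x}")
        case True
        then have "integrable lborel (\<lambda>s. indicator {0<..<x} t * (indicator {t<..<x} s *\<^sub>R F t s))"
          using inner[OF True] by (simp add: set_integrable_def)
        then show ?thesis by (simp add: H_def mult.assoc)
      qed (simp add: H_def)
    qed
  qed
  then have eq: "(LINT s|lborel. LINT t|lborel. H t s) = (LINT t|lborel. LINT s|lborel. H t s)"
    using lborel_pair.Fubini_integral[of H] by (simp add: case_prod_beta')
  have "(LINT s:{0<..<x}|lborel. LINT t:{0<..<s}|lborel. F t s) = (LINT s|lborel. LINT t|lborel. H t s)"
    unfolding H2 set_lebesgue_integral_def
    by (intro Bochner_Integration.integral_cong refl) (simp add: mult.assoc)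
  also have "\<dots> = (LINT t|lborel. LINT s|lborel. H t s)" by (rule eq)
  also have "\<dots> = (LINT t:{0<..<x}|lborel. LINT s:{t<..<x}|lborel. F t s)"
    unfolding H_def set_lebesgue_integral_def
    by (intro Bochner_Integration.integral_cong refl) (simp add: mult.assoc)
  finally show ?thesis .
qed


lemma set_integral_nonneg:
  fixes f :: "real \<Rightarrow> real"
  assumes "\<And>x. x \<in> A \<Longrightarrow> 0 \<le> f x"
  shows "0 \<le> (LINT x:A|M. f x)"
  unfolding set_lebesgue_integral_def
  by (rule Bochner_Integration.integral_nonneg) (use assms in \<open>auto simp: indicator_def\<close>)

lemma const01: "(LINT x:dom01|lborel. (c::real)) = c"
  by (subst set_integral_const) auto

lemma sli_if: "(LINT s:{a<..<b}|lborel. f s) = (LINT s|lborel. (if a < s \<and> s < b then f s else (0::real)))"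
  unfolding set_lebesgue_integral_def by (intro Bochner_Integration.integral_cong) (auto simp: indicator_def)

lemma split_int:
  fixes G :: "real \<Rightarrow> real"
  assumes G: "set_integrable lborel {a<..<b} G" and t: "a \<le> t" "t \<le> b"
  shows "(LINT s:{a<..<b}|lborel. G s) = (LINT s:{a<..<t}|lborel. G s) + (LINT s:{t<..<b}|lborel. G s)"
proof -
  have m: "set_borel_measurable lborel {a<..<b} G"
    using G by (simp add: set_integrable_def set_borel_measurable_def borel_measurable_integrable)
  have "(LINT s:{a<..<b}|lborel. G s) = (LINT s:{a<..<t} \<union> {t<..<b}|lborel. G s)"
  proof (rule set_integral_cong_set[symmetric])
    show "set_borel_measurable lborel ({a<..<t} \<union> {t<..<b}) G"
      by (rule set_borel_measurable_subset[OF m]) (use t in auto)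
    show "AE x in lborel. (x \<in> {a<..<b}) = (x \<in> {a<..<t} \<union> {t<..<b})"
      using AE_lborel_singleton[of t] by eventually_elim (use t in auto)
  qed fact
  also have "\<dots> = (LINT s:{a<..<t}|lborel. G s) + (LINT s:{t<..<b}|lborel. G s)"
    by (rule set_integral_Un) (use t in \<open>auto intro!: set_integrable_subset[OF G]\<close>)
  finally show ?thesis .
qed

lemma ibp:
  fixes G d\<phi> \<phi> :: "real \<Rightarrow> real"
  assumes G: "set_integrable lborel dom01 G" and d: "set_integrable lborel dom01 d\<phi>"
    and \<phi>: "\<And>x. x \<in> {0..1} \<Longrightarrow> \<phi> x = (LINT t:{0<..<x}|lborel. d\<phi> t)" and \<phi>1: "\<phi> 1 = 0"
  shows "(LINT s:dom01|lborel. G s * \<phi> s) = - (LINT t:dom01|lborel. (LINT s:{0<..<t}|lborel. G s) * d\<phi> t)"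
proof -
  define G' where "G' = (\<lambda>t. indicator dom01 t * G t)"
  define d' where "d' = (\<lambda>t. indicator dom01 t * d\<phi> t)"
  have [measurable]: "G' \<in> borel_measurable borel"
    using G by (simp add: G'_def set_integrable_def borel_measurable_integrable)
  have [measurable]: "d' \<in> borel_measurable borel"
    using d by (simp add: d'_def set_integrable_def borel_measurable_integrable)
  define Ft where "Ft = (\<lambda>t s. d' t * G' s)"
  define C where "C = (LINT s:dom01|lborel. \<bar>G s\<bar>)"
  have GA: "set_integrable lborel dom01 (\<lambda>s. \<bar>G s\<bar>)" using set_integrable_abs[OF G] .
  have sw: "(LINT s:{0<..<1}|lborel. LINT t:{0<..<s}|lborel. Ft t s)
       = (LINT t:{0<..<1}|lborel. LINT s:{t<..<1}|lborel. Ft t s)"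
  proof (rule tri_swap)
    show "(\<lambda>p. Ft (fst p) (snd p)) \<in> borel_measurable (borel \<Otimes>\<^sub>M borel)"
      unfolding Ft_def by measurable
    show "set_integrable lborel {t<..<1} (Ft t)" if "t \<in> {0<..<1}" for t
    proof -
      have "set_integrable lborel {t<..<1} G"
        by (rule set_integrable_subset[OF G]) (use that in auto)
      then have "set_integrable lborel {t<..<1} (\<lambda>s. d' t * G s)" by auto
      then show ?thesis unfolding Ft_def
        by (rule set_integrable_cong[THEN iffD1, rotated -1]) (use that in \<open>auto simp: G'_def\<close>)
    qed
    show "set_integrable lborel {0<..<1} (\<lambda>t. LINT s:{t<..<1}|lborel. \<bar>Ft t s\<bar>)"
    proof (rule set_integrable_bound[where f="\<lambda>t. C * \<bar>d\<phi> t\<bar>"])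
      show "set_integrable lborel {0<..<1} (\<lambda>t. C * \<bar>d\<phi> t\<bar>)"
        using set_integrable_abs[OF d] by auto
      have "(\<lambda>t. LINT s|lborel. (if t < s \<and> s < 1 then \<bar>Ft t s\<bar> else 0)) \<in> borel_measurable borel"
        unfolding Ft_def by measurable
      then show "set_borel_measurable lborel {0<..<1} (\<lambda>t. LINT s:{t<..<1}|lborel. \<bar>Ft t s\<bar>)"
        unfolding sli_if set_borel_measurable_def by measurable
      show "AE t in lborel. t \<in> {0<..<1} \<longrightarrow> norm (LINT s:{t<..<1}|lborel. \<bar>Ft t s\<bar>) \<le> norm (C * \<bar>d\<phi> t\<bar>)"
      proof (intro AE_I2 impI)
        fix t :: real assume t: "t \<in> {0<..<1}"
        have i: "set_integrable lborel {t<..<1} (\<lambda>s. \<bar>G s\<bar>)"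
          by (rule set_integrable_subset[OF GA]) (use t in auto)
        have "(LINT s:{t<..<1}|lborel. \<bar>Ft t s\<bar>) = \<bar>d\<phi> t\<bar> * (LINT s:{t<..<1}|lborel. \<bar>G s\<bar>)"
          unfolding set_integral_mult_right[symmetric] Ft_def
          by (rule set_lebesgue_integral_cong) (use t in \<open>auto simp: d'_def G'_def abs_mult\<close>)
        also have "\<dots> \<le> \<bar>d\<phi> t\<bar> * C"
        proof (rule mult_left_mono)
          show "(LINT s:{t<..<1}|lborel. \<bar>G s\<bar>) \<le> C"
            unfolding C_def set_lebesgue_integral_def
            using i GA t by (intro integral_mono) (auto simp: set_integrable_def indicator_def)
        qed simp
        finally have "(LINT s:{t<..<1}|lborel. \<bar>Ft t s\<bar>) \<le> \<bar>d\<phi> t\<bar> * C" .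
        moreover have "0 \<le> (LINT s:{t<..<1}|lborel. \<bar>Ft t s\<bar>)"
          by (rule set_integral_nonneg) auto
        moreover have "0 \<le> C" unfolding C_def by (rule set_integral_nonneg) auto
        ultimately show "norm (LINT s:{t<..<1}|lborel. \<bar>Ft t s\<bar>) \<le> norm (C * \<bar>d\<phi> t\<bar>)"
          by (simp add: mult.commute)
      qed
    qed
  qed
  have "(LINT s:dom01|lborel. G s * \<phi> s) = (LINT s:{0<..<1}|lborel. LINT t:{0<..<s}|lborel. Ft t s)"
  proof (rule set_lebesgue_integral_cong)
    show "\<forall>s. s \<in> dom01 \<longrightarrow> G s * \<phi> s = (LINT t:{0<..<s}|lborel. Ft t s)"
    proof (intro allI impI)
      fix s :: real assume s: "s \<in> dom01"
      have "G s * \<phi> s = (LINT t:{0<..<s}|lborel. G s * d\<phi> t)" using s \<phi>[of s] by simp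
      also have "\<dots> = (LINT t:{0<..<s}|lborel. Ft t s)"
        by (rule set_lebesgue_integral_cong) (use s in \<open>auto simp: Ft_def d'_def G'_def\<close>)
      finally show "G s * \<phi> s = (LINT t:{0<..<s}|lborel. Ft t s)" .
    qed
  qed simp
  also note sw
  also have "(LINT t:{0<..<1}|lborel. LINT s:{t<..<1}|lborel. Ft t s)
      = (LINT t:dom01|lborel. d\<phi> t * (LINT s:dom01|lborel. G s) - (LINT s:{0<..<t}|lborel. G s) * d\<phi> t)"
  proof (rule set_lebesgue_integral_cong)
    show "\<forall>t. t \<in> dom01 \<longrightarrow> (LINT s:{t<..<1}|lborel. Ft t s) = d\<phi> t * (LINT s:dom01|lborel. G s) - (LINT s:{0<..<t}|lborel. G s) * d\<phi> t"
    proof (intro allI impI)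
      fix t :: real assume t: "t \<in> dom01"
      have "(LINT s:{t<..<1}|lborel. Ft t s) = (LINT s:{t<..<1}|lborel. d\<phi> t * G s)"
        by (rule set_lebesgue_integral_cong) (use t in \<open>auto simp: Ft_def d'_def G'_def\<close>)
      also have "\<dots> = d\<phi> t * ((LINT s:dom01|lborel. G s) - (LINT s:{0<..<t}|lborel. G s))"
        using split_int[OF G, of t] t by simp
      finally show "(LINT s:{t<..<1}|lborel. Ft t s) = d\<phi> t * (LINT s:dom01|lborel. G s) - (LINT s:{0<..<t}|lborel. G s) * d\<phi> t"
        by (simp add: algebra_simps)
    qed
  qed simp
  also have "\<dots> = (LINT s:dom01|lborel. G s) * (LINT t:dom01|lborel. d\<phi> t) - (LINT t:dom01|lborel. (LINT s:{0<..<t}|lborel. G s) * d\<phi> t)"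
  proof -
    obtain B where B: "\<And>x. x \<in> {0..1} \<Longrightarrow> \<bar>LINT s:{0<..<x}|lborel. G s\<bar> \<le> B"
      using cont_bnd[OF prim_cont[OF G]] by metis
    have i2: "set_integrable lborel dom01 (\<lambda>t. (LINT s:{0<..<t}|lborel. G s) * d\<phi> t)"
      by (rule int_bnd_mult[OF d cont_sbm[OF prim_cont[OF G]], of B]) (use B in auto)
    show ?thesis
      using i2 d by (simp add: set_integral_diff mult.commute)
  qed
  also have "(LINT t:dom01|lborel. d\<phi> t) = 0" using \<phi>[of 1] \<phi>1 by simp
  finally show ?thesis by simp
qed


lemma regularity:
  fixes dw G :: "real \<Rightarrow> real"
  assumes dw: "L2D dw" and G: "set_integrable lborel dom01 G"
    and weak: "\<And>\<phi> d\<phi>. H10 \<phi> d\<phi> \<Longrightarrow> ip dw d\<phi> = ip G \<phi>"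
  shows "\<exists>m. AE t in lborel. t \<in> dom01 \<longrightarrow> dw t = m - (LINT s:{0<..<t}|lborel. G s)"
proof -
  define F where "F = (\<lambda>t. LINT s:{0<..<t}|lborel. G s)"
  have Fc: "continuous_on {0..1} F" unfolding F_def by (rule prim_cont[OF G])
  obtain B where B: "\<And>x. x \<in> {0..1} \<Longrightarrow> \<bar>F x\<bar> \<le> B" using cont_bnd[OF Fc] by metis
  have FL2: "L2D F" by (rule bnd_L2[OF cont_sbm[OF Fc], of B]) (use B in auto)
  define m where "m = (LINT t:dom01|lborel. dw t + F t)"
  define d\<psi> where "d\<psi> = (\<lambda>t. dw t + F t - m)"
  define \<psi> where "\<psi> = (\<lambda>x. LINT t:{0<..<x}|lborel. d\<psi> t)"
  have cL2: "L2D (\<lambda>t. m)" by (rule bnd_L2[of _ "\<bar>m\<bar>"]) auto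
  have dL2: "L2D d\<psi>" unfolding d\<psi>_def by (intro L2_diff L2_add dw FL2 cL2)
  have di: "set_integrable lborel dom01 d\<psi>" by (rule L2_L1[OF dL2])
  have sumi: "set_integrable lborel dom01 (\<lambda>t. dw t + F t)" by (intro L2_L1 L2_add dw FL2)
  have "\<psi> 1 = (LINT t:dom01|lborel. (dw t + F t) - m)" by (simp add: \<psi>_def d\<psi>_def)
  also have "\<dots> = 0"
    using set_integral_diff(2)[OF sumi int_const_dom01[of m]] by (simp add: const01 m_def)
  finally have \<psi>1: "\<psi> 1 = 0" .
  have H: "H10 \<psi> d\<psi>" unfolding H10_def using dL2 \<psi>1 by (auto simp: \<psi>_def)
  have "ip dw d\<psi> = ip G \<psi>" by (rule weak[OF H])
  also have "ip G \<psi> = - (LINT t:dom01|lborel. F t * d\<psi> t)"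
    unfolding ip_def F_def by (rule ibp[OF G di, where \<phi>=\<psi>]) (simp_all add: \<psi>_def \<psi>1[unfolded \<psi>_def])
  finally have e1: "(LINT t:dom01|lborel. dw t * d\<psi> t) + (LINT t:dom01|lborel. F t * d\<psi> t) = 0"
    by (simp add: ip_def)
  have e2: "(LINT t:dom01|lborel. m * d\<psi> t) = 0"
    using \<psi>1 by (simp add: \<psi>_def)
  have i1: "set_integrable lborel dom01 (\<lambda>t. dw t * d\<psi> t)" by (rule L2_prod[OF dw dL2])
  have i2: "set_integrable lborel dom01 (\<lambda>t. F t * d\<psi> t)" by (rule L2_prod[OF FL2 dL2])
  have i3: "set_integrable lborel dom01 (\<lambda>t. m * d\<psi> t)" using di by auto
  have "(LINT t:dom01|lborel. d\<psi> t * d\<psi> t)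
      = (LINT t:dom01|lborel. (dw t * d\<psi> t + F t * d\<psi> t) - m * d\<psi> t)"
    by (rule set_lebesgue_integral_cong) (auto simp: d\<psi>_def algebra_simps)
  also have "\<dots> = 0"
    using set_integral_diff(2)[OF set_integral_add(1)[OF i1 i2] i3] set_integral_add(2)[OF i1 i2] e1 e2
    by simp
  finally have z: "integral\<^sup>L lborel (\<lambda>t. indicator dom01 t *\<^sub>R (d\<psi> t * d\<psi> t)) = 0"
    by (simp add: set_lebesgue_integral_def)
  have "AE t in lborel. indicator dom01 t *\<^sub>R (d\<psi> t * d\<psi> t) = 0"
    using z L2_prod[OF dL2 dL2]
    by (subst integral_nonneg_eq_0_iff_AE[symmetric]) (auto simp: set_integrable_def indicator_def)
  then have "AE t in lborel. t \<in> dom01 \<longrightarrow> dw t = m - F t"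
    by eventually_elim (auto simp: d\<psi>_def indicator_def split: if_splits)
  then show ?thesis unfolding F_def by blast
qed


lemma bnd_int_sub:
  fixes v :: "real \<Rightarrow> real"
  assumes v[measurable]: "v \<in> borel_measurable borel" and M: "\<And>t. t \<in> {0..1} \<Longrightarrow> \<bar>v t\<bar> \<le> M" and x: "x \<le> 1"
  shows "set_integrable lborel {0<..<x} v"
proof -
  have "set_integrable lborel dom01 v"
    by (rule bnd_int[where C=M]) (use M in \<open>auto intro!: sbm_borel\<close>)
  then show ?thesis by (rule prim_int[OF _ x])
qed

lemma semigroup:
  fixes v :: "real \<Rightarrow> real" and a b x :: real
  assumes a: "a > 0" and b: "b > 0" and ab: "a + b = 1"
    and v[measurable]: "v \<in> borel_measurable borel" and M: "\<And>t. t \<in> {0..1} \<Longrightarrow> \<bar>v t\<bar> \<le> M"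
    and x: "0 < x" "x \<le> 1"
  shows "(LINT s:{0<..<x}|lborel. (x-s) powr (a-1) * (LINT t:{0<..<s}|lborel. (s-t) powr (b-1) * v t))
       = Beta a b * (LINT t:{0<..<x}|lborel. v t)"
proof -
  define Ft where "Ft = (\<lambda>t s. (x-s) powr (a-1) * ((s-t) powr (b-1) * v t))"
  have vi: "set_integrable lborel {0<..<x} v" by (rule bnd_int_sub[OF v M x(2)])
  have inner_eq: "(LINT s:{t<..<x}|lborel. Ft t s) = Beta a b * v t" if t: "t \<in> {0<..<x}" for t
  proof -
    have "(LINT s:{t<..<x}|lborel. Ft t s) = (LINT s:{t<..<x}|lborel. (x-s) powr (a-1) * (s-t) powr (b-1)) * v t"
      unfolding Ft_def set_integral_mult_left[symmetric] by (simp add: mult.assoc)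
    also have "\<dots> = Beta a b * v t" using beta_shift(2)[OF a b, of t x] t ab by simp
    finally show ?thesis .
  qed
  have sw: "(LINT s:{0<..<x}|lborel. LINT t:{0<..<s}|lborel. Ft t s)
       = (LINT t:{0<..<x}|lborel. LINT s:{t<..<x}|lborel. Ft t s)"
  proof (rule tri_swap)
    show "(\<lambda>p. Ft (fst p) (snd p)) \<in> borel_measurable (borel \<Otimes>\<^sub>M borel)"
      unfolding Ft_def by measurable
    show "set_integrable lborel {t<..<x} (Ft t)" if t: "t \<in> {0<..<x}" for t
    proof -
      have "set_integrable lborel {t<..<x} (\<lambda>s. (x-s) powr (a-1) * (s-t) powr (b-1) * v t)"
        using beta_shift(1)[OF a b, of t x] t by auto
      then show ?thesis unfolding Ft_def by (simp add: mult.assoc)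
    qed
    show "set_integrable lborel {0<..<x} (\<lambda>t. LINT s:{t<..<x}|lborel. \<bar>Ft t s\<bar>)"
    proof -
      have "set_integrable lborel {0<..<x} (\<lambda>t. Beta a b * \<bar>v t\<bar>)"
        using set_integrable_abs[OF vi] by auto
      moreover have "(LINT s:{t<..<x}|lborel. \<bar>Ft t s\<bar>) = Beta a b * \<bar>v t\<bar>" if t: "t \<in> {0<..<x}" for t
      proof -
        have "(LINT s:{t<..<x}|lborel. \<bar>Ft t s\<bar>) = (LINT s:{t<..<x}|lborel. (x-s) powr (a-1) * (s-t) powr (b-1)) * \<bar>v t\<bar>"
          unfolding set_integral_mult_left[symmetric] Ft_def by (simp add: abs_mult mult.assoc)
        also have "\<dots> = Beta a b * \<bar>v t\<bar>" using beta_shift(2)[OF a b, of t x] t ab by simp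
        finally show ?thesis .
      qed
      ultimately show ?thesis
        using set_integrable_cong[where M=lborel and M'=lborel and A="{0<..<x}" and A'="{0<..<x}"
            and f="\<lambda>t. LINT s:{t<..<x}|lborel. \<bar>Ft t s\<bar>" and f'="\<lambda>t. Beta a b * \<bar>v t\<bar>"]
        by simp
    qed
  qed
  have "(LINT s:{0<..<x}|lborel. (x-s) powr (a-1) * (LINT t:{0<..<s}|lborel. (s-t) powr (b-1) * v t))
      = (LINT s:{0<..<x}|lborel. LINT t:{0<..<s}|lborel. Ft t s)"
    unfolding Ft_def set_integral_mult_right[symmetric] ..
  also note sw
  also have "(LINT t:{0<..<x}|lborel. LINT s:{t<..<x}|lborel. Ft t s) = (LINT t:{0<..<x}|lborel. Beta a b * v t)"
    by (rule set_lebesgue_integral_cong) (use inner_eq in auto)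
  finally show ?thesis by simp
qed


lemma frac_subst:
  fixes v :: "real \<Rightarrow> real" and \<beta> x :: real
  shows "(LINT t:{0<..<x}|lborel. (x-t) powr (\<beta>-1) * v t)
       = (LINT s|lborel. (if 0 < s \<and> s < x then s powr (\<beta>-1) * v (x - s) else 0))"
proof -
  define f where "f = (\<lambda>t. indicator {0<..<x} t *\<^sub>R ((x-t) powr (\<beta>-1) * v t))"
  have "(LINT t:{0<..<x}|lborel. (x-t) powr (\<beta>-1) * v t) = integral\<^sup>L lborel f"
    by (simp add: f_def set_lebesgue_integral_def)
  also have "\<dots> = \<bar>-1\<bar> *\<^sub>R (LINT s|lborel. f (x + (-1) * s))"
    by (rule lborel_integral_real_affine) simp
  also have "(\<lambda>s. f (x + (-1) * s)) = (\<lambda>s. (if 0 < s \<and> s < x then s powr (\<beta>-1) * v (x - s) else 0))"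
    by (auto simp: f_def indicator_def intro!: ext)
  finally show ?thesis by simp
qed

lemma frac_cont:
  fixes v :: "real \<Rightarrow> real" and \<beta> :: real
  assumes b: "\<beta> > 0" and v[measurable]: "v \<in> borel_measurable borel" and vc: "continuous_on {0..1} v"
  shows "continuous_on {0..1} (\<lambda>x. LINT t:{0<..<x}|lborel. (x-t) powr (\<beta>-1) * v t)"
proof -
  obtain M where M: "\<And>t. t \<in> {0..1} \<Longrightarrow> \<bar>v t\<bar> \<le> M" using cont_bnd[OF vc] by metis
  have M0: "0 \<le> M" using M[of 0] by simp
  define K where "K = (\<lambda>x. LINT s|lborel. (if 0 < s \<and> s < x then s powr (\<beta>-1) * v (x - s) else 0))"
  define w where "w = (\<lambda>s. indicator dom01 s * (s powr (\<beta>-1) * M))"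
  have wi: "integrable lborel w"
  proof -
    have "set_integrable lborel {0<..<1} (\<lambda>s. (1-s) powr (1-1) * (s-0) powr (\<beta>-1))"
      using beta_shift(1)[of 1 \<beta> 0 1] b by simp
    then have "set_integrable lborel {0<..<1} (\<lambda>s. s powr (\<beta>-1))"
      by (rule set_integrable_cong[THEN iffD1, rotated -1]) auto
    then have "set_integrable lborel {0<..<1} (\<lambda>s. s powr (\<beta>-1) * M)" by auto
    then show ?thesis by (simp add: w_def set_integrable_def)
  qed
  have "continuous_on {0..1} K"
  proof (rule continuous_on_sequentiallyI)
    fix u :: "nat \<Rightarrow> real" and a :: real
    assume u: "\<forall>n. u n \<in> {0..1}" and a: "a \<in> {0..1}" and lim: "u \<longlonglongrightarrow> a"
    show "(\<lambda>n. K (u n)) \<longlonglongrightarrow> K a"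
      unfolding K_def
    proof (rule integral_dominated_convergence[where w=w])
      show "(\<lambda>s. if 0 < s \<and> s < a then s powr (\<beta>-1) * v (a - s) else 0) \<in> borel_measurable lborel"
        by measurable
      show "(\<lambda>s. if 0 < s \<and> s < u n then s powr (\<beta>-1) * v (u n - s) else 0) \<in> borel_measurable lborel" for n
        by measurable
      show "integrable lborel w" by (rule wi)
      show "AE s in lborel. norm (if 0 < s \<and> s < u n then s powr (\<beta>-1) * v (u n - s) else 0) \<le> w s" for n
      proof (intro AE_I2)
        fix s
        show "norm (if 0 < s \<and> s < u n then s powr (\<beta>-1) * v (u n - s) else 0) \<le> w s"
        proof (cases "0 < s \<and> s < u n")
          case True
          then have "u n - s \<in> {0..1}" "s \<in> dom01" using u[rule_format, of n] by auto
          then have "\<bar>v (u n - s)\<bar> \<le> M" by (intro M)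
          then show ?thesis using True \<open>s \<in> dom01\<close>
            by (auto simp: w_def abs_mult intro!: mult_left_mono)
        next
          case False
          then show ?thesis using M0 by (auto simp: w_def indicator_def)
        qed
      qed
      show "AE s in lborel. (\<lambda>n. if 0 < s \<and> s < u n then s powr (\<beta>-1) * v (u n - s) else 0)
             \<longlonglongrightarrow> (if 0 < s \<and> s < a then s powr (\<beta>-1) * v (a - s) else 0)"
        using AE_lborel_singleton[of a]
      proof eventually_elim
        fix s assume sa: "s \<noteq> a"
        show "(\<lambda>n. if 0 < s \<and> s < u n then s powr (\<beta>-1) * v (u n - s) else 0)
             \<longlonglongrightarrow> (if 0 < s \<and> s < a then s powr (\<beta>-1) * v (a - s) else 0)"
        proof (cases "0 < s \<and> s < a")
          case True
          have ev: "eventually (\<lambda>n. s < u n) sequentially"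
            using order_tendstoD(1)[OF lim, of s] True by simp
          have vl: "(\<lambda>n. v (u n - s)) \<longlonglongrightarrow> v (a - s)"
          proof (rule continuous_on_tendsto_compose[OF vc])
            show "(\<lambda>n. u n - s) \<longlonglongrightarrow> a - s" by (intro tendsto_intros lim)
            show "a - s \<in> {0..1}" using True a by auto
            show "\<forall>\<^sub>F n in sequentially. u n - s \<in> {0..1}"
            proof (rule eventually_mono[OF ev])
              fix n assume "s < u n" then show "u n - s \<in> {0..1}" using u[rule_format, of n] True by auto
            qed
          qed
          have tl: "(\<lambda>n. s powr (\<beta>-1) * v (u n - s)) \<longlonglongrightarrow> s powr (\<beta>-1) * v (a - s)"
            by (intro tendsto_intros vl)
          have "eventually (\<lambda>n. s powr (\<beta>-1) * v (u n - s) = (if 0 < s \<and> s < u n then s powr (\<beta>-1) * v (u n - s) else 0)) sequentially"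
            using True by (auto intro: eventually_mono[OF ev])
          from Lim_transform_eventually[OF tl this] show ?thesis using True by simp
        next
          case False
          then have "s \<le> 0 \<or> a < s" using sa by auto
          then have ev: "eventually (\<lambda>n. \<not> (0 < s \<and> s < u n)) sequentially"
          proof
            assume "a < s"
            then show ?thesis using order_tendstoD(2)[OF lim, of s] by (auto elim: eventually_mono)
          qed auto
          show ?thesis using False
            by (simp add: tendsto_eventually ev[THEN eventually_mono] del: de_Morgan_conj)
        qed
      qed
    qed
  qed
  then show ?thesis unfolding K_def by (subst frac_subst)
qed


lemma int_bnd_mult_S:
  fixes g k :: "real \<Rightarrow> real"
  assumes "set_integrable lborel S g" "set_borel_measurable lborel S k"
    "\<And>x. x \<in> S \<Longrightarrow> \<bar>k x\<bar> \<le> C"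
  shows "set_integrable lborel S (\<lambda>x. k x * g x)"
proof (rule set_integrable_bound[where f="\<lambda>x. C * \<bar>g x\<bar>"])
  show "set_integrable lborel S (\<lambda>x. C * \<bar>g x\<bar>)"
    using set_integrable_abs[OF assms(1)] by auto
  show "set_borel_measurable lborel S (\<lambda>x. k x * g x)"
    using assms(1,2) by (intro sbm_mult) (auto simp: set_integrable_def set_borel_measurable_def)
  show "AE x in lborel. x \<in> S \<longrightarrow> norm (k x * g x) \<le> norm (C * \<bar>g x\<bar>)"
  proof (intro AE_I2 impI)
    fix x assume x: "x \<in> S"
    have "\<bar>k x\<bar> * \<bar>g x\<bar> \<le> C * \<bar>g x\<bar>" by (rule mult_right_mono[OF assms(3)[OF x]]) simp
    also have "\<dots> \<le> \<bar>C * \<bar>g x\<bar>\<bar>" by simp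
    finally show "norm (k x * g x) \<le> norm (C * \<bar>g x\<bar>)" by (simp add: abs_mult)
  qed
qed

lemma cont_sbm_S:
  fixes f :: "real \<Rightarrow> real"
  assumes "continuous_on {0..1} f" "S \<subseteq> {0..1}" "S \<in> sets borel"
  shows "set_borel_measurable lborel S f"
proof -
  have "continuous_on S f" by (rule continuous_on_subset[OF assms(1) assms(2)])
  then have "set_borel_measurable borel S f" by (intro set_measurable_continuous_on assms(3))
  then show ?thesis unfolding set_borel_measurable_def by simp
qed

lemma Gp1: "(z::real) > 0 \<Longrightarrow> Gamma (z + 1) = z * Gamma z"
  by (rule Gamma_plus1) (auto elim!: nonpos_Ints_cases)

lemma Beta1: assumes "(b::real) > 0" shows "Beta 1 b = 1 / b"
proof -
  have g: "Gamma b \<noteq> 0" using Gamma_real_pos[OF assms] by simp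
  show ?thesis using Gp1[OF assms] g by (simp add: Beta_def add.commute)
qed

lemma pow_int:
  fixes e x :: real assumes e: "e > -1" and x: "0 < x"
  shows "set_integrable lborel {0<..<x} (\<lambda>t. t powr e)"
    and "(LINT t:{0<..<x}|lborel. t powr e) = x powr (e + 1) / (e + 1)"
proof -
  have eq: "\<And>t. t \<in> {0<..<x} \<Longrightarrow> (x - t) powr (1 - 1) * (t - 0) powr ((e+1) - 1) = t powr e"
    by simp
  show "set_integrable lborel {0<..<x} (\<lambda>t. t powr e)"
    using beta_shift(1)[of 1 "e+1" 0 x] e x
    using set_integrable_cong[where M=lborel and M'=lborel and A="{0<..<x}" and A'="{0<..<x}"
            and f="\<lambda>t. (x - t) powr (1 - 1) * (t - 0) powr ((e+1) - 1)" and f'="\<lambda>t. t powr e"] eq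
    by simp
  have "(LINT t:{0<..<x}|lborel. t powr e) = (LINT t:{0<..<x}|lborel. (x - t) powr (1 - 1) * (t - 0) powr ((e+1) - 1))"
    by (rule set_lebesgue_integral_cong) (use eq in auto)
  also have "\<dots> = x powr (e + 1) / (e + 1)"
    using beta_shift(2)[of 1 "e+1" 0 x] e x Beta1[of "e+1"] by (simp add: add.commute)
  finally show "(LINT t:{0<..<x}|lborel. t powr e) = x powr (e + 1) / (e + 1)" .
qed

theorem theorem3p4:
  fixes \<alpha> \<mu> c0 :: real and f q p w dw :: "real \<Rightarrow> real"
  assumes alpha: "3/2 < \<alpha>" "\<alpha> < 2"
    and mu: "\<mu> \<ge> \<alpha>"
    and f: "L2D f" and q: "LinfD q"
    and c0: "c0 = Gamma (\<mu> + 1) / Gamma (1 + \<mu> - \<alpha>)"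
    and p: "p = (\<lambda>x. c0 * x powr (\<mu> - \<alpha>) - q x * x powr \<mu>)"
    and inj1: "\<And>v dv. H10 v dv \<Longrightarrow>
                 (\<forall>\<phi> d\<phi>. H10 \<phi> d\<phi> \<longrightarrow> Aform \<alpha> q p dv \<phi> d\<phi> = 0) \<Longrightarrow>
                 (\<forall>x\<in>{0..1}. v x = 0)"
    and inj2: "\<And>v dv. H10 v dv \<Longrightarrow>
                 (\<forall>\<psi> d\<psi>. H10 \<psi> d\<psi> \<longrightarrow> Aform \<alpha> q p d\<psi> v dv = 0) \<Longrightarrow>
                 (\<forall>x\<in>{0..1}. v x = 0)"
    and w: "H10 w dw"
    and weak: "\<And>\<phi> d\<phi>. H10 \<phi> d\<phi> \<Longrightarrow> Aform \<alpha> q p dw \<phi> d\<phi> = ip f \<phi>"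
  shows "let u = (\<lambda>x. rl_D2a \<alpha> dw x - rl_D2a \<alpha> dw 1 * x powr \<mu>) in
           L2D u \<and> continuous_on {0..1} u \<and> u 0 = 0 \<and> u 1 = 0 \<and>
           (\<exists>h. L2D h \<and> RL_deriv_is \<alpha> u h \<and>
                (AE x in lborel. x \<in> dom01 \<longrightarrow> - h x + q x * u x = f x))"
proof -
  define \<beta> where "\<beta> = \<alpha> - 1"
  have b1: "1/2 < \<beta>" "\<beta> < 1" "0 < \<beta>" using alpha by (auto simp: \<beta>_def)
  define Dw where "Dw = rl_D2a \<alpha> dw"
  have Dw_def': "Dw x = (1 / Gamma \<beta>) * (LINT t:{0<..<x}|lborel. (x - t) powr (\<beta> - 1) * dw t)" for x
    by (simp add: Dw_def rl_D2a_def frac_int_def \<beta>_def)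
  define c where "c = Dw 1"
  define u where "u = (\<lambda>x. Dw x - c * x powr \<mu>)"
  have dwL2: "L2D dw" and wdef: "\<And>x. x \<in> {0..1} \<Longrightarrow> w x = (LINT t:{0<..<x}|lborel. dw t)"
    using w by (auto simp: H10_def)
  have Dw_m: "set_borel_measurable lborel dom01 Dw"
    unfolding Dw_def rl_D2a_def by (rule frac_meas[OF L2_meas[OF dwL2]])
  define CD where "CD = \<bar>1 / Gamma \<beta>\<bar> * (Beta (2*\<beta> - 1) 1 + (LINT t:dom01|lborel. (dw t)^2))"
  have Dw_b: "\<bar>Dw x\<bar> \<le> CD" if "x \<in> {0<..1}" for x
    unfolding Dw_def' CD_def abs_mult
    by (rule mult_left_mono[OF frac_L2(2)[OF b1(1) dwL2]]) (use that in auto)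
  have Dw_i: "set_integrable lborel dom01 Dw"
    by (rule bnd_int[OF Dw_m, of CD]) (use Dw_b in auto)
  obtain Cq where Cq: "AE x in lborel. x \<in> dom01 \<longrightarrow> \<bar>q x\<bar> \<le> Cq" and q_m: "set_borel_measurable lborel dom01 q"
    using q by (auto simp: LinfD_def)
  have pw_m: "set_borel_measurable lborel dom01 (\<lambda>x. x powr e)" for e :: real
    by (intro sbm_borel) measurable
  have pw_b: "\<bar>x powr e\<bar> \<le> 1" if "x \<in> dom01" "e \<ge> 0" for x e :: real
    using powr_le1[of x e] that by auto
  have p_m: "set_borel_measurable lborel dom01 p"
    unfolding p using pw_m q_m by (intro sbm_diff sbm_mult sbm_const) auto
  have p_b: "AE x in lborel. x \<in> dom01 \<longrightarrow> \<bar>p x\<bar> \<le> \<bar>c0\<bar> + \<bar>Cq\<bar>"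
    using Cq
  proof eventually_elim
    case (elim x)
    show ?case
    proof
      assume x: "x \<in> dom01"
      have "\<bar>p x\<bar> \<le> \<bar>c0\<bar> * \<bar>x powr (\<mu> - \<alpha>)\<bar> + \<bar>q x\<bar> * \<bar>x powr \<mu>\<bar>"
        unfolding p using abs_triangle_ineq4[of "c0 * x powr (\<mu> - \<alpha>)" "q x * x powr \<mu>"]
        by (simp add: abs_mult)
      also have "\<dots> \<le> \<bar>c0\<bar> * 1 + \<bar>Cq\<bar> * 1"
        using elim x pw_b[OF x, of "\<mu> - \<alpha>"] pw_b[OF x, of \<mu>] mu alpha
        by (intro add_mono mult_mono) auto
      finally show "\<bar>p x\<bar> \<le> \<bar>c0\<bar> + \<bar>Cq\<bar>" by simp
    qed
  qed
  have p_i: "set_integrable lborel dom01 p" by (rule bnd_int[OF p_m p_b])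
  define G0 where "G0 = (\<lambda>s. f s - q s * Dw s - c * p s)"
  have qDw_i: "set_integrable lborel dom01 (\<lambda>s. q s * Dw s)"
    by (rule int_bnd_mult[OF Dw_i q_m Cq])
  have G0_i: "set_integrable lborel dom01 G0"
    unfolding G0_def using L2_L1[OF f] qDw_i p_i by auto
  have weak': "ip dw d\<phi> = ip G0 \<phi>" if H: "H10 \<phi> d\<phi>" for \<phi> d\<phi>
  proof -
    have dL2: "L2D d\<phi>" and \<phi>def: "\<And>x. x \<in> {0..1} \<Longrightarrow> \<phi> x = (LINT t:{0<..<x}|lborel. d\<phi> t)"
      using H by (auto simp: H10_def)
    have \<phi>c: "continuous_on {0..1} \<phi>"
      by (rule continuous_on_eq[OF prim_cont[OF L2_L1[OF dL2]]]) (simp add: \<phi>def)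
    obtain B\<phi> where B\<phi>: "\<And>x. x \<in> {0..1} \<Longrightarrow> \<bar>\<phi> x\<bar> \<le> B\<phi>" using cont_bnd[OF \<phi>c] by metis
    have \<phi>_m: "set_borel_measurable lborel dom01 \<phi>" by (rule cont_sbm[OF \<phi>c])
    have \<phi>_b: "AE x in lborel. x \<in> dom01 \<longrightarrow> \<bar>\<phi> x\<bar> \<le> B\<phi>" using B\<phi> by auto
    have i_f: "set_integrable lborel dom01 (\<lambda>x. f x * \<phi> x)"
      using int_bnd_mult[OF L2_L1[OF f] \<phi>_m \<phi>_b] by (simp add: mult.commute)
    have i_q: "set_integrable lborel dom01 (\<lambda>x. Dw x * (q x * \<phi> x))"
      using int_bnd_mult[OF qDw_i \<phi>_m \<phi>_b] by (simp add: mult_ac)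
    have i_p: "set_integrable lborel dom01 (\<lambda>x. p x * \<phi> x)"
      using int_bnd_mult[OF p_i \<phi>_m \<phi>_b] by (simp add: mult.commute)
    have A: "ip dw d\<phi> + ip Dw (\<lambda>x. q x * \<phi> x) + c * ip p \<phi> = ip f \<phi>"
      using weak[OF H] by (simp add: Aform_def Dw_def c_def)
    have "ip G0 \<phi> = (LINT x:dom01|lborel. (f x * \<phi> x - Dw x * (q x * \<phi> x)) - c * (p x * \<phi> x))"
      unfolding ip_def G0_def by (rule set_lebesgue_integral_cong) (auto simp: algebra_simps)
    also have "\<dots> = ip f \<phi> - ip Dw (\<lambda>x. q x * \<phi> x) - c * ip p \<phi>"
      using i_f i_q i_p by (simp add: ip_def set_integral_diff)
    finally show ?thesis using A by simp
  qed
  obtain m where m: "AE t in lborel. t \<in> dom01 \<longrightarrow> dw t = m - (LINT s:{0<..<t}|lborel. G0 s)"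
    using regularity[OF dwL2 G0_i weak'] by blast
  define G' where "G' = (\<lambda>s. indicator dom01 s * G0 s)"
  have G'_m[measurable]: "G' \<in> borel_measurable borel"
    using G0_i by (simp add: G'_def set_integrable_def borel_measurable_integrable real_scaleR_def)
  have G'_i: "set_integrable lborel dom01 G'"
    using G0_i by (rule set_integrable_cong[THEN iffD1, rotated -1]) (auto simp: G'_def)
  define F where "F = (\<lambda>t. LINT s:{0<..<t}|lborel. G' s)"
  have F_m[measurable]: "F \<in> borel_measurable borel"
  proof -
    have "(\<lambda>t. LINT s|lborel. (if 0 < s \<and> s < t then G' s else 0)) \<in> borel_measurable borel"
      by measurable
    then show ?thesis unfolding F_def sli_if .
  qed
  have F_G0: "F t = (LINT s:{0<..<t}|lborel. G0 s)" if "t \<le> 1" for t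
    unfolding F_def by (rule set_lebesgue_integral_cong) (use that in \<open>auto simp: G'_def\<close>)
  have Fc: "continuous_on {0..1} F" unfolding F_def by (rule prim_cont[OF G'_i])
  define v where "v = (\<lambda>t. m - F t)"
  have v_m[measurable]: "v \<in> borel_measurable borel" unfolding v_def by measurable
  have vc: "continuous_on {0..1} v" unfolding v_def by (intro continuous_intros Fc)
  obtain Mv where Mv: "\<And>t. t \<in> {0..1} \<Longrightarrow> \<bar>v t\<bar> \<le> Mv" using cont_bnd[OF vc] by metis
  have dw_v: "AE t in lborel. t \<in> dom01 \<longrightarrow> dw t = v t"
    using m by eventually_elim (auto simp: v_def F_G0)
  have dw'_m[measurable]: "(\<lambda>t. indicator dom01 t * dw t) \<in> borel_measurable borel"
    by (rule sbm_ind[OF L2_meas[OF dwL2]])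
  have int_v: "(LINT t:{0<..<x}|lborel. k t * dw t) = (LINT t:{0<..<x}|lborel. k t * v t)"
    if x: "x \<le> 1" and k[measurable]: "k \<in> borel_measurable borel" for x k
  proof -
    have "(LINT t:{0<..<x}|lborel. k t * dw t) = (LINT t:{0<..<x}|lborel. k t * (indicator dom01 t * dw t))"
      by (rule set_lebesgue_integral_cong) (use x in \<open>auto simp: indicator_def\<close>)
    also have "\<dots> = (LINT t:{0<..<x}|lborel. k t * v t)"
    proof (rule set_lebesgue_integral_cong_AE)
      show "AE t\<in>{0<..<x} in lborel. k t * (indicator dom01 t * dw t) = k t * v t"
        using dw_v by eventually_elim (use x in \<open>auto simp: indicator_def\<close>)
    qed measurable
    finally show ?thesis .
  qed
  define J where "J = (\<lambda>x. LINT t:{0<..<x}|lborel. (x - t) powr (\<beta> - 1) * v t)"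
  have Dw_J: "Dw x = (1 / Gamma \<beta>) * J x" if "x \<in> {0..1}" for x
    unfolding Dw_def' J_def using int_v[of x "\<lambda>t. (x - t) powr (\<beta> - 1)"] that by simp
  have w_v: "w x = (LINT t:{0<..<x}|lborel. v t)" if "x \<in> {0..1}" for x
    using wdef[OF that] int_v[of x "\<lambda>t. 1"] that by simp
  have Jc: "continuous_on {0..1} J" unfolding J_def by (rule frac_cont[OF b1(3) v_m vc])
  have Dwc: "continuous_on {0..1} Dw"
    by (rule continuous_on_eq[of _ "\<lambda>x. (1 / Gamma \<beta>) * J x"])
       (use Gamma_real_pos[OF b1(3)] in \<open>auto intro!: continuous_intros Jc simp: Dw_J\<close>)
  have uc: "continuous_on {0..1} u"
    unfolding u_def using mu alpha by (intro continuous_intros Dwc continuous_on_powr') auto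
  have u0: "u 0 = 0" using mu alpha by (simp add: u_def Dw_def' set_lebesgue_integral_def)
  have u1: "u 1 = 0" by (simp add: u_def c_def)
  obtain Bu where Bu: "\<And>x. x \<in> {0..1} \<Longrightarrow> \<bar>u x\<bar> \<le> Bu" using cont_bnd[OF uc] by metis
  have u_m: "set_borel_measurable lborel dom01 u" by (rule cont_sbm[OF uc])
  have uL2: "L2D u" by (rule bnd_L2[OF u_m, of Bu]) (use Bu in auto)
  define h where "h = (\<lambda>x. q x * u x - f x)"
  have qu_b: "AE x in lborel. x \<in> dom01 \<longrightarrow> \<bar>q x * u x\<bar> \<le> \<bar>Cq\<bar> * Bu"
    using Cq
  proof eventually_elim
    case (elim x)
    show ?case
    proof
      assume x: "x \<in> dom01"
      have "\<bar>q x\<bar> * \<bar>u x\<bar> \<le> \<bar>Cq\<bar> * Bu"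
        using elim x Bu[of x] by (intro mult_mono) auto
      then show "\<bar>q x * u x\<bar> \<le> \<bar>Cq\<bar> * Bu" by (simp add: abs_mult)
    qed
  qed
  have hL2: "L2D h"
    unfolding h_def by (intro L2_diff f bnd_L2[OF sbm_mult[OF q_m u_m] qu_b])
  have RL: "RL_deriv_is \<alpha> u h"
  proof -
    define E where "E = \<mu> + 2 - \<alpha>"
    have E0: "E > 1" using mu alpha by (simp add: E_def)
    define K1 where "K1 = Beta (2 - \<alpha>) (\<mu> + 1) / Gamma (2 - \<alpha>)"
    define g1 where "g1 = (\<lambda>t. v t - c * K1 * E * t powr (E - 1))"
    have a2: "0 < 2 - \<alpha>" using alpha by simp
    have GK: "K1 * E = c0 / (E - 1)"
    proof -
      have gpos: "Gamma (E - 1) > 0" "Gamma (2 - \<alpha>) > 0" "Gamma (\<mu> + 1) > 0"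
        using E0 a2 mu alpha by auto
      have "Gamma (2 - \<alpha> + (\<mu> + 1)) = Gamma ((E - 1) + 1 + 1)" by (simp add: E_def algebra_simps)
      also have "\<dots> = E * ((E - 1) * Gamma (E - 1))"
        using Gp1[of "E - 1 + 1"] Gp1[of "E - 1"] E0 by simp
      finally have g3: "Gamma (2 - \<alpha> + (\<mu> + 1)) = E * ((E - 1) * Gamma (E - 1))" .
      have c0': "c0 = Gamma (\<mu> + 1) / Gamma (E - 1)" unfolding c0 E_def by (simp add: algebra_simps)
      have alg: "A * B / (e * ((e - 1) * C)) / A * e = B / C / (e - 1)"
        if "A > 0" "C > 0" "e > 1" for A B C e :: real
        using that by (simp add: field_simps)
      show ?thesis
        unfolding K1_def Beta_def g3 c0' using alg[OF gpos(2) gpos(1) E0] by simp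
    qed
    have g1_i: "set_integrable lborel dom01 g1"
    proof -
      have "set_integrable lborel dom01 v" using bnd_int_sub[OF v_m Mv order_refl] by simp
      moreover have "set_integrable lborel dom01 (\<lambda>t. t powr (E - 1))"
        using pow_int(1)[of "E - 1" 1] E0 by simp
      ultimately show ?thesis unfolding g1_def by auto
    qed
    have part1: "frac_int (2 - \<alpha>) u x = 0 + (LINT t:{0<..<x}|lborel. g1 t)" if x: "x \<in> dom01" for x
    proof -
      have eqk: "(x - s) powr (2 - \<alpha> - 1) * (s - 0) powr (1 - 1) = (x - s) powr (2 - \<alpha> - 1)" if "s \<in> {0<..<x}" for s
        using that by simp
      have ki: "set_integrable lborel {0<..<x} (\<lambda>s. (x - s) powr (2 - \<alpha> - 1))"
        using beta_shift(1)[OF a2, of 1 0 x] x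
          set_integrable_cong[where M=lborel and M'=lborel and A="{0<..<x}" and A'="{0<..<x}"
            and f="\<lambda>s. (x - s) powr (2 - \<alpha> - 1) * (s - 0) powr (1 - 1)" and f'="\<lambda>s. (x - s) powr (2 - \<alpha> - 1)"] eqk
        by simp
      obtain BJ where BJ: "\<And>t. t \<in> {0..1} \<Longrightarrow> \<bar>J t\<bar> \<le> BJ" using cont_bnd[OF Jc] by metis
      have iJ: "set_integrable lborel {0<..<x} (\<lambda>s. (x - s) powr (2 - \<alpha> - 1) * J s)"
      proof -
        have sub: "{0<..<x} \<subseteq> {0..1}" using x by auto
        show ?thesis using int_bnd_mult_S[OF ki cont_sbm_S[OF Jc sub], of BJ] BJ x by (auto simp: mult.commute)
      qed
      have iP: "set_integrable lborel {0<..<x} (\<lambda>s. (x - s) powr (2 - \<alpha> - 1) * s powr \<mu>)"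
      proof -
        have m1: "set_borel_measurable lborel {0<..<x} (\<lambda>s. s powr \<mu>)"
          unfolding set_borel_measurable_def by measurable
        have b1': "\<bar>s powr \<mu>\<bar> \<le> 1" if "s \<in> {0<..<x}" for s
          using pw_b[of s \<mu>] that x mu alpha by auto
        show ?thesis using int_bnd_mult_S[OF ki m1 b1'] by (simp add: mult.commute)
      qed
      have "(LINT s:{0<..<x}|lborel. (x - s) powr (2 - \<alpha> - 1) * u s)
          = (LINT s:{0<..<x}|lborel. (1 / Gamma \<beta>) * ((x - s) powr (2 - \<alpha> - 1) * J s) - c * ((x - s) powr (2 - \<alpha> - 1) * s powr \<mu>))"
        by (rule set_lebesgue_integral_cong) (use x in \<open>auto simp: u_def Dw_J algebra_simps\<close>)
      also have "\<dots> = (1 / Gamma \<beta>) * (LINT s:{0<..<x}|lborel. (x - s) powr (2 - \<alpha> - 1) * J s)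
            - c * (LINT s:{0<..<x}|lborel. (x - s) powr (2 - \<alpha> - 1) * s powr \<mu>)"
        using iJ iP by (simp add: set_integral_diff)
      also have "(LINT s:{0<..<x}|lborel. (x - s) powr (2 - \<alpha> - 1) * J s) = Beta (2 - \<alpha>) \<beta> * w x"
        unfolding J_def using semigroup[OF a2 b1(3) _ v_m Mv, of x] x w_v[of x] by (simp add: \<beta>_def)
      also have "(LINT s:{0<..<x}|lborel. (x - s) powr (2 - \<alpha> - 1) * s powr \<mu>) = Beta (2 - \<alpha>) (\<mu> + 1) * x powr E"
      proof -
        have "(LINT s:{0<..<x}|lborel. (x - s) powr (2 - \<alpha> - 1) * s powr \<mu>)
            = (LINT s:{0<..<x}|lborel. (x - s) powr (2 - \<alpha> - 1) * (s - 0) powr ((\<mu> + 1) - 1))"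
          by (rule set_lebesgue_integral_cong) auto
        also have "\<dots> = Beta (2 - \<alpha>) (\<mu> + 1) * x powr E"
          using beta_shift(2)[OF a2, of "\<mu> + 1" 0 x] x mu alpha by (simp add: E_def algebra_simps)
        finally show ?thesis .
      qed
      finally have L: "frac_int (2 - \<alpha>) u x = w x - c * K1 * x powr E"
        unfolding frac_int_def K1_def Beta_def \<beta>_def
        using Gamma_real_pos[OF a2] Gamma_real_pos[OF b1(3)[unfolded \<beta>_def]]
        by (simp add: field_simps)
      have "(LINT t:{0<..<x}|lborel. g1 t) = (LINT t:{0<..<x}|lborel. v t) - c * K1 * E * (LINT t:{0<..<x}|lborel. t powr (E - 1))"
        unfolding g1_def using bnd_int_sub[OF v_m Mv, of x] pow_int(1)[of "E - 1" x] x E0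
        by (simp add: set_integral_diff)
      also have "\<dots> = w x - c * K1 * x powr E"
        using pow_int(2)[of "E - 1" x] x E0 w_v[of x] by simp
      finally show ?thesis using L by simp
    qed
    have part2: "g1 x = m + (LINT t:{0<..<x}|lborel. h t)" if x: "x \<in> dom01" for x
    proof -
      have "(LINT t:{0<..<x}|lborel. h t) = (LINT t:{0<..<x}|lborel. - G0 t - c * c0 * t powr (\<mu> - \<alpha>))"
        by (rule set_lebesgue_integral_cong) (use x in \<open>auto simp: h_def u_def G0_def p algebra_simps\<close>)
      also have "\<dots> = - F x - c * c0 * (x powr (E - 1) / (E - 1))"
      proof -
        have i1: "set_integrable lborel {0<..<x} G0" by (rule prim_int[OF G0_i]) (use x in auto)
        have i2: "set_integrable lborel {0<..<x} (\<lambda>t. t powr (\<mu> - \<alpha>))" using pow_int(1)[of "\<mu> - \<alpha>" x] mu x by simp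
        have "(LINT t:{0<..<x}|lborel. - G0 t - c * c0 * t powr (\<mu> - \<alpha>))
            = - (LINT t:{0<..<x}|lborel. G0 t) - c * c0 * (LINT t:{0<..<x}|lborel. t powr (\<mu> - \<alpha>))"
        proof -
          have i1': "set_integrable lborel {0<..<x} (\<lambda>t. - G0 t)"
            using set_integrable_mult_right[of "-1", OF i1] by simp
          have i2': "set_integrable lborel {0<..<x} (\<lambda>t. c * c0 * t powr (\<mu> - \<alpha>))"
            using i2 by auto
          show ?thesis
            using set_integral_diff(2)[OF i1' i2'] set_integral_uminus[OF i1] by simp
        qed
        also have "(LINT t:{0<..<x}|lborel. t powr (\<mu> - \<alpha>)) = x powr (E - 1) / (E - 1)"
          using pow_int(2)[of "\<mu> - \<alpha>" x] mu x by (simp add: E_def algebra_simps)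
        finally show ?thesis using F_G0[of x] x by simp
      qed
      finally have Lh: "(LINT t:{0<..<x}|lborel. h t) = - F x - c * c0 * (x powr (E - 1) / (E - 1))" .
      have "c * K1 * E * x powr (E - 1) = c * (K1 * E) * x powr (E - 1)" by (simp add: mult_ac)
      also have "\<dots> = c * c0 * (x powr (E - 1) / (E - 1))" unfolding GK by simp
      finally have e: "c * K1 * E * x powr (E - 1) = c * c0 * (x powr (E - 1) / (E - 1))" .
      show ?thesis unfolding g1_def v_def using Lh e by simp
    qed
    show ?thesis
      unfolding RL_deriv_is_def
      by (rule exI[of _ g1], rule exI[of _ 0], rule exI[of _ m]) (use g1_i L2_L1[OF hL2] part1 part2 in auto)
  qed
  show ?thesis
    unfolding Let_def u_def[symmetric, unfolded Dw_def c_def]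
    using uL2 uc u0 u1 hL2 RL by (auto simp: h_def)
qed


end
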